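(* Let $\Lambda$ be the set of all injections $t$ whose domain $\operatorname{dom}t$ is a countable ordinal, with values in $\omega=\{0,1,2,\dots\}$, and whose range is a co-infinite subset of $\omega$, ordered by extension ($t\preceq u$ iff $\operatorname{dom}t\subseteq\operatorname{dom}u$ and $u|_{\operatorname{dom}t}=t$). Let $\lambda(t)=\sum_{\alpha\in\operatorname{dom}t}2^{-t(\alpha)}$ and let $\mathcal{T}_\lambda$ be the topology on $\Lambda$ in which a base of neighbourhoods of $t$ consists of the sets $\{u\in\Lambda: t\preceq u,\ \lambda(u)<\lambda(t)+\epsilon\}$, $\epsilon>0$. Then $(\Lambda,\mathcal{T}_\lambda)$ is a Baire space.
   Context: A Baire space is a topological space in which every countable intersection of dense open sets is dense. *)

theory Defs
  imports "HOL-Analysis.Analysis"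
begin

definition Baire_space :: "'a topology \<Rightarrow> bool" where
  "Baire_space X \<longleftrightarrow>
     (\<forall>U :: nat \<Rightarrow> 'a set.
        (\<forall>n. openin X (U n) \<and> X closure_of (U n) = topspace X)
        \<longrightarrow> X closure_of (\<Inter>n. U n) = topspace X)"

text \<open>Countable ordinals are modelled as the proper initial segments {..<a} of a
  well-ordered type 'o of order type omega_1 (uncountable, all proper initial
  segments countable).\<close>
definition Lam :: "('o::wellorder \<rightharpoonup> nat) set" where
  "Lam = {t. (\<exists>a. dom t = {..<a}) \<and> inj_on t (dom t) \<and> infinite (UNIV - ran t)}"

definition lam :: "('o::wellorder \<rightharpoonup> nat) \<Rightarrow> real" where
  "lam t = infsum (\<lambda>b. (1/2::real) ^ the (t b)) (dom t)"

definition nbhd :: "('o::wellorder \<rightharpoonup> nat) \<Rightarrow> real \<Rightarrow> ('o \<rightharpoonup> nat) set" where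
  "nbhd t \<epsilon> = {u \<in> Lam. t \<subseteq>\<^sub>m u \<and> lam u < lam t + \<epsilon>}"

definition T_lam :: "('o::wellorder \<rightharpoonup> nat) topology" where
  "T_lam = topology (\<lambda>U. U \<subseteq> Lam \<and> (\<forall>t\<in>U. \<exists>\<epsilon>>0. nbhd t \<epsilon> \<subseteq> U))"

end

theory Submission
  imports Defs
begin

definition wt :: "('o \<rightharpoonup> nat) \<Rightarrow> 'o \<Rightarrow> real" where
  "wt t b = (1/2::real) ^ the (t b)"

lemma lam_wt: "lam t = infsum (wt t) (dom t)"
  unfolding lam_def wt_def by (rule refl)

lemma wt_nonneg: "wt t b \<ge> 0"
  unfolding wt_def by simp

lemma wt_summable:
  assumes "inj_on t (dom t)" "A \<subseteq> dom t"
  shows "wt t summable_on A"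
proof -
  let ?g = "\<lambda>n::nat. (1/2::real) ^ n"
  have "?g summable_on UNIV"
    by (subst summable_on_UNIV_nonneg_real_iff) (auto intro: summable_geometric)
  hence "?g summable_on ((the \<circ> t) ` dom t)"
    by (rule summable_on_subset_banach) auto
  moreover have inj: "inj_on (the \<circ> t) (dom t)"
    using assms(1) unfolding inj_on_def by (metis comp_apply domD option.sel)
  ultimately have "(?g \<circ> (the \<circ> t)) summable_on dom t"
    using summable_on_reindex by blast
  hence "wt t summable_on dom t"
    by (simp add: wt_def[abs_def] comp_def)
  thus ?thesis using assms(2) summable_on_subset_banach by blast
qed

lemma wt_agree: "t \<subseteq>\<^sub>m u \<Longrightarrow> b \<in> dom t \<Longrightarrow> wt t b = wt u b"
  unfolding wt_def map_le_def by auto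

lemma lam_mono:
  assumes "inj_on u (dom u)" "t \<subseteq>\<^sub>m u"
  shows "lam t \<le> lam u"
proof -
  have sub: "dom t \<subseteq> dom u" using assms(2) map_le_implies_dom_le by blast
  have "lam t = infsum (wt u) (dom t)"
    unfolding lam_wt using wt_agree[OF assms(2)] by (rule infsum_cong)
  also have "\<dots> \<le> infsum (wt u) (dom u)"
    by (rule infsum_mono2[OF wt_summable[OF assms(1) sub] wt_summable[OF assms(1) order_refl] sub wt_nonneg])
  finally show ?thesis unfolding lam_wt .
qed

lemma lam_add:
  assumes "inj_on u (dom u)" "t \<subseteq>\<^sub>m u" "b \<in> dom u" "b \<notin> dom t"
  shows "lam t + wt u b \<le> lam u"
proof -
  have sub: "dom t \<subseteq> dom u" using assms(2) map_le_implies_dom_le by blast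
  have "lam t = infsum (wt u) (dom t)"
    unfolding lam_wt using wt_agree[OF assms(2)] by (rule infsum_cong)
  hence "lam t + wt u b = infsum (wt u) (insert b (dom t))"
    using infsum_insert[OF wt_summable[OF assms(1) sub] assms(4)] by simp
  also have "\<dots> \<le> infsum (wt u) (dom u)"
    by (rule infsum_mono2[OF wt_summable[OF assms(1)] wt_summable[OF assms(1) order_refl] _ wt_nonneg]) (use sub assms(3) in auto)
  finally show ?thesis unfolding lam_wt .
qed

lemma nbhd_mono: "e1 \<le> e2 \<Longrightarrow> nbhd t e1 \<subseteq> nbhd t e2"
  unfolding nbhd_def by auto

lemma istop: "istopology (\<lambda>U. U \<subseteq> (Lam::('o::wellorder \<rightharpoonup> nat) set) \<and> (\<forall>t\<in>U. \<exists>\<epsilon>>0. nbhd t \<epsilon> \<subseteq> U))"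
  unfolding istopology_def
proof (rule conjI; intro allI impI)
  fix S T :: "('o \<rightharpoonup> nat) set"
  assume S: "S \<subseteq> Lam \<and> (\<forall>t\<in>S. \<exists>\<epsilon>>0. nbhd t \<epsilon> \<subseteq> S)"
    and T: "T \<subseteq> Lam \<and> (\<forall>t\<in>T. \<exists>\<epsilon>>0. nbhd t \<epsilon> \<subseteq> T)"
  show "S \<inter> T \<subseteq> Lam \<and> (\<forall>t\<in>S \<inter> T. \<exists>\<epsilon>>0. nbhd t \<epsilon> \<subseteq> S \<inter> T)"
  proof (intro conjI ballI)
    show "S \<inter> T \<subseteq> Lam" using S by auto
    fix t assume "t \<in> S \<inter> T"
    then obtain e1 e2 where "e1 > 0" "nbhd t e1 \<subseteq> S" "e2 > 0" "nbhd t e2 \<subseteq> T"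
      using S T by blast
    thus "\<exists>\<epsilon>>0. nbhd t \<epsilon> \<subseteq> S \<inter> T"
      using nbhd_mono[of "min e1 e2" e1 t] nbhd_mono[of "min e1 e2" e2 t]
      by (intro exI[of _ "min e1 e2"]) auto
  qed
next
  fix K :: "('o \<rightharpoonup> nat) set set"
  assume K: "\<forall>S\<in>K. S \<subseteq> Lam \<and> (\<forall>t\<in>S. \<exists>\<epsilon>>0. nbhd t \<epsilon> \<subseteq> S)"
  show "\<Union>K \<subseteq> Lam \<and> (\<forall>t\<in>\<Union>K. \<exists>\<epsilon>>0. nbhd t \<epsilon> \<subseteq> \<Union>K)"
  proof (intro conjI ballI)
    show "\<Union>K \<subseteq> Lam" using K by auto
    fix t assume "t \<in> \<Union>K"
    then obtain S where S: "S \<in> K" "t \<in> S" by blast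
    then obtain \<epsilon> where "\<epsilon> > 0" "nbhd t \<epsilon> \<subseteq> S" using K by meson
    thus "\<exists>\<epsilon>>0. nbhd t \<epsilon> \<subseteq> \<Union>K" using S(1) by blast
  qed
qed

lemma openin_T: "openin T_lam U \<longleftrightarrow> U \<subseteq> Lam \<and> (\<forall>t\<in>U. \<exists>\<epsilon>>0. nbhd t \<epsilon> \<subseteq> U)"
  unfolding T_lam_def by (simp only: topology_inverse'[OF istop])

lemma topspace_T: "topspace T_lam = Lam"
proof -
  have "openin T_lam Lam" unfolding openin_T nbhd_def by (auto intro: exI[of _ 1])
  hence "Lam \<subseteq> topspace T_lam" by (rule openin_subset)
  moreover have "topspace T_lam \<subseteq> Lam"
    unfolding topspace_def openin_T by blast
  ultimately show ?thesis by blast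
qed

lemma nbhd_open: "openin T_lam (nbhd t e)"
  unfolding openin_T
proof (intro conjI ballI)
  show "nbhd t e \<subseteq> Lam" unfolding nbhd_def by auto
  fix u assume u: "u \<in> nbhd t e"
  show "\<exists>\<epsilon>>0. nbhd u \<epsilon> \<subseteq> nbhd t e"
  proof (intro exI[of _ "lam t + e - lam u"] conjI)
    show "lam t + e - lam u > 0" using u unfolding nbhd_def by auto
    show "nbhd u (lam t + e - lam u) \<subseteq> nbhd t e"
      using u unfolding nbhd_def by (auto intro: map_le_trans)
  qed
qed

lemma nbhd_self: "t \<in> Lam \<Longrightarrow> e > 0 \<Longrightarrow> t \<in> nbhd t e"
  unfolding nbhd_def by auto

lemma finite_chain_subset:
  fixes A :: "nat \<Rightarrow> 'a set"
  assumes "mono A" "finite F" "F \<subseteq> (\<Union>m. A m)"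
  shows "\<exists>m. F \<subseteq> A m"
  using assms(2,3)
proof (induction F rule: finite_induct)
  case empty then show ?case by auto
next
  case (insert x F)
  then obtain m1 m2 where "F \<subseteq> A m1" "x \<in> A m2" by auto
  hence "insert x F \<subseteq> A (max m1 m2)"
    using monoD[OF assms(1), of m1 "max m1 m2"] monoD[OF assms(1), of m2 "max m1 m2"] by auto
  thus ?case by blast
qed

theorem lemma10p1:
  assumes "uncountable (UNIV :: 'o::wellorder set)"
    and "\<forall>a::'o. countable {..<a}"
  shows "Baire_space (T_lam :: ('o \<rightharpoonup> nat) topology)"
  unfolding Baire_space_def
proof (intro allI impI)
  fix U :: "nat \<Rightarrow> ('o \<rightharpoonup> nat) set"
  assume UU: "\<forall>n. openin T_lam (U n) \<and> T_lam closure_of (U n) = topspace T_lam"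
  show "T_lam closure_of (\<Inter>n. U n) = topspace T_lam"
    unfolding dense_intersects_open
  proof (intro allI impI)
    fix W :: "('o \<rightharpoonup> nat) set"
    assume W: "openin T_lam W \<and> W \<noteq> {}"
    define Inv where "Inv = (\<lambda>(t::'o\<rightharpoonup>nat, e::real, k::nat).
       t \<in> Lam \<and> e > 0 \<and> k \<notin> ran t \<and> e \<le> (1/2)^k \<and> nbhd t e \<subseteq> W)"
    define R where "R = (\<lambda>n (t::'o\<rightharpoonup>nat, e::real, k::nat) (t'::'o\<rightharpoonup>nat, e'::real, k'::nat).
       k < k' \<and> nbhd t' e' \<subseteq> U n \<inter> nbhd t e \<and> lam t' + 2*e' \<le> lam t + e)"
    have init: "\<exists>x. Inv x"
    proof -
      obtain t0 where t0: "t0 \<in> W" using W by blast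
      then obtain e0 where e0: "e0 > 0" "nbhd t0 e0 \<subseteq> W" using W unfolding openin_T by blast
      have t0L: "t0 \<in> Lam" using W t0 openin_T by blast
      hence "infinite (UNIV - ran t0)" unfolding Lam_def by blast
      then obtain k0 where k0: "k0 \<notin> ran t0" by (metis Diff_iff finite.emptyI ex_in_conv)
      have "nbhd t0 (min e0 ((1/2)^k0)) \<subseteq> W" using e0 nbhd_mono[of "min e0 ((1/2)^k0)" e0 t0] by auto
      hence "Inv (t0, min e0 ((1/2)^k0), k0)" unfolding Inv_def using t0L e0 k0 by auto
      thus ?thesis by blast
    qed
    have step: "\<exists>y. Inv y \<and> R n x y" if "Inv x" for n x
    proof -
      obtain t e k where x: "x = (t,e,k)" by (cases x)
      have inv: "t \<in> Lam" "e>0" "k \<notin> ran t" "e \<le> (1/2)^k" "nbhd t e \<subseteq> W"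
        using that x unfolding Inv_def by auto
      have "U n \<inter> nbhd t e \<noteq> {}"
        using UU nbhd_open[of t e] nbhd_self[OF inv(1,2)] unfolding dense_intersects_open by blast
      then obtain t' where t': "t' \<in> U n \<inter> nbhd t e" by blast
      have "openin T_lam (U n \<inter> nbhd t e)" using UU nbhd_open by blast
      then obtain e1 where e1: "e1 > 0" "nbhd t' e1 \<subseteq> U n \<inter> nbhd t e" and t'L: "t' \<in> Lam"
        using t' unfolding openin_T by blast
      have lt: "lam t' < lam t + e" using t' unfolding nbhd_def by auto
      have "infinite (UNIV - ran t')" using t'L unfolding Lam_def by blast
      then obtain k' where k': "k' \<in> UNIV - ran t'" "k < k'"
        unfolding infinite_nat_iff_unbounded by blast
      define e' where "e' = min e1 (min ((lam t + e - lam t')/2) ((1/2::real)^k'))"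
      have e'pos: "e' > 0" using e1 lt by (simp add: e'_def)
      have "nbhd t' e' \<subseteq> nbhd t' e1" by (rule nbhd_mono) (simp add: e'_def)
      hence sub: "nbhd t' e' \<subseteq> U n \<inter> nbhd t e" using e1 by blast
      have I1: "Inv (t', e', k')" unfolding Inv_def using t'L e'pos k' sub inv(5)
        by (auto simp: e'_def)
      have "e' \<le> (lam t + e - lam t')/2" unfolding e'_def by linarith
      hence "lam t' + 2*e' \<le> lam t + e" by (simp add: field_simps)
      hence "R n x (t', e', k')" unfolding R_def x using k' sub by auto
      with I1 show ?thesis by blast
    qed
    obtain f where f: "\<forall>n. Inv (f n) \<and> R n (f n) (f (Suc n))"
      using dependent_nat_choice[of "\<lambda>n x. Inv x" "\<lambda>n x y. R n x y"] init step by blast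
    define t where "t n = fst (f n)" for n
    define e where "e n = fst (snd (f n))" for n
    define k where "k n = snd (snd (f n))" for n
    have fn: "f n = (t n, e n, k n)" for n by (simp add: t_def e_def k_def)
    have I: "t n \<in> Lam" "e n > 0" "k n \<notin> ran (t n)" "e n \<le> (1/2)^(k n)" "nbhd (t n) (e n) \<subseteq> W" for n
      using f[rule_format, of n] unfolding fn Inv_def by auto
    have Rn: "k n < k (Suc n)" "nbhd (t (Suc n)) (e (Suc n)) \<subseteq> U n \<inter> nbhd (t n) (e n)"
      "lam (t (Suc n)) + 2 * e (Suc n) \<le> lam (t n) + e n" for n
      using f[rule_format, of n] unfolding fn R_def by auto
    have nest: "nbhd (t m) (e m) \<subseteq> nbhd (t n) (e n)" if "n \<le> m" for n m
      using lift_Suc_antimono_le[of "\<lambda>n. nbhd (t n) (e n)"] Rn(2) that by blast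
    have ext: "t m \<in> nbhd (t n) (e n)" if "n \<le> m" for n m
      using nest[OF that] nbhd_self[OF I(1,2)] by blast
    have ext_le: "t n \<subseteq>\<^sub>m t m" "lam (t m) < lam (t n) + e n" if "n \<le> m" for n m
      using ext[OF that] unfolding nbhd_def by auto
    have chain: "t n \<subseteq>\<^sub>m t m \<or> t m \<subseteq>\<^sub>m t n" for n m
      using ext_le(1) nat_le_linear by blast
    have injt: "inj_on (t n) (dom (t n))" for n using I(1) unfolding Lam_def by blast
    have domt: "\<exists>a. dom (t n) = {..<a}" for n using I(1) unfolding Lam_def by blast
    define tw where "tw x = (if \<exists>n. x \<in> dom (t n) then t (SOME n. x \<in> dom (t n)) x else None)" for x
    have tw_eq: "tw x = t n x" if "x \<in> dom (t n)" for x n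
    proof -
      let ?m = "SOME n. x \<in> dom (t n)"
      have m: "x \<in> dom (t ?m)" using that by (rule someI)
      have "t ?m x = t n x"
      proof (cases "t n \<subseteq>\<^sub>m t ?m")
        case True thus ?thesis using that unfolding map_le_def by (metis (no_types, lifting))
      next
        case False hence "t ?m \<subseteq>\<^sub>m t n" using chain by blast
        thus ?thesis using m unfolding map_le_def by (metis (no_types, lifting))
      qed
      thus ?thesis using that tw_def by auto
    qed
    have dom_tw: "dom tw = (\<Union>n. dom (t n))"
    proof
      show "dom tw \<subseteq> (\<Union>n. dom (t n))"
      proof
        fix x assume "x \<in> dom tw"
        hence "\<exists>n. x \<in> dom (t n)"
        proof (rule contrapos_pp)
          assume "\<not> (\<exists>n. x \<in> dom (t n))"
          hence "tw x = None" unfolding tw_def by simp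
          thus "x \<notin> dom tw" by auto
        qed
        thus "x \<in> (\<Union>n. dom (t n))" by blast
      qed
      show "(\<Union>n. dom (t n)) \<subseteq> dom tw"
      proof
        fix x assume "x \<in> (\<Union>n. dom (t n))"
        then obtain n where "x \<in> dom (t n)" by blast
        thus "x \<in> dom tw" using tw_eq[of x n] by (simp add: dom_def)
      qed
    qed
    have le_tw: "t n \<subseteq>\<^sub>m tw" for n unfolding map_le_def using tw_eq by auto
    have mono_dom: "mono (\<lambda>n. dom (t n))"
      by (rule monoI) (use ext_le(1) map_le_implies_dom_le in blast)
    have D_down: "y \<in> dom tw" if xd: "x \<in> dom tw" and yx: "y < x" for x y
    proof -
      obtain n where n: "x \<in> dom (t n)" using xd unfolding dom_tw by blast
      obtain a where a: "dom (t n) = {..<a}" using domt[of n] by blast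
      have "x < a" using n a by simp
      hence "y < a" using yx less_trans by blast
      hence "y \<in> dom (t n)" using a by simp
      thus ?thesis unfolding dom_tw by blast
    qed
    have D_count: "countable (dom tw)"
    proof -
      have "countable (dom (t n))" for n using domt assms(2) by metis
      thus ?thesis unfolding dom_tw by (intro countable_UN) auto
    qed
    have "dom tw \<noteq> UNIV" using assms(1) D_count by auto
    then obtain b0 where b0: "b0 \<notin> dom tw" by auto
    define b where "b = (LEAST x. x \<notin> dom tw)"
    have bn: "b \<notin> dom tw" unfolding b_def using b0 by (rule LeastI)
    have dom_eq: "dom tw = {..<b}"
    proof
      show "dom tw \<subseteq> {..<b}"
      proof
        fix x assume x: "x \<in> dom tw"
        show "x \<in> {..<b}"
        proof (rule ccontr)
          assume "x \<notin> {..<b}"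
          hence "b = x \<or> b < x" by auto
          thus False using x bn D_down by blast
        qed
      qed
      show "{..<b} \<subseteq> dom tw"
        unfolding b_def using not_less_Least by blast
    qed
    have inj_tw: "inj_on tw (dom tw)"
    proof (rule inj_onI)
      fix x y assume x: "x \<in> dom tw" and y: "y \<in> dom tw" and xy: "tw x = tw y"
      obtain n where n: "x \<in> dom (t n)" using x dom_tw by blast
      obtain m where m: "y \<in> dom (t m)" using y dom_tw by blast
      show "x = y"
      proof (cases "t n \<subseteq>\<^sub>m t m")
        case True
        hence "x \<in> dom (t m)" using n map_le_implies_dom_le by blast
        moreover have "t m x = t m y" using xy tw_eq[OF m] tw_eq[OF \<open>x \<in> dom (t m)\<close>] by simp
        ultimately show ?thesis using injt[of m] m by (blast dest: inj_onD)
      next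
        case False
        hence "t m \<subseteq>\<^sub>m t n" using chain by blast
        hence "y \<in> dom (t n)" using m map_le_implies_dom_le by blast
        moreover have "t n x = t n y" using xy tw_eq[OF n] tw_eq[OF \<open>y \<in> dom (t n)\<close>] by simp
        ultimately show ?thesis using injt[of n] n by (blast dest: inj_onD)
      qed
    qed
    have k_notin: "k n \<notin> ran tw" for n
    proof
      assume "k n \<in> ran tw"
      then obtain x where x: "tw x = Some (k n)" by (auto simp: ran_def)
      then have "x \<in> dom tw" by auto
      then obtain m where "x \<in> dom (t m)" using dom_tw by auto
      hence xp: "x \<in> dom (t (max m n))" using map_le_implies_dom_le[OF ext_le(1)[of m "max m n"]] by auto
      hence tp: "t (max m n) x = Some (k n)" using tw_eq x by auto
      show False
      proof (cases "x \<in> dom (t n)")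
        case True
        then have "t n x = Some (k n)" using tw_eq x by auto
        thus False using I(3)[of n] by (auto simp: ran_def)
      next
        case False
        have "lam (t n) + wt (t (max m n)) x \<le> lam (t (max m n))"
          by (rule lam_add[OF injt ext_le(1) xp False]) simp
        moreover have "wt (t (max m n)) x = (1/2)^(k n)" unfolding wt_def using tp by simp
        moreover have "lam (t (max m n)) < lam (t n) + e n" using ext_le(2) by simp
        ultimately show False using I(4)[of n] by linarith
      qed
    qed
    have smk: "strict_mono k" using Rn(1) strict_mono_Suc_iff by blast
    have "infinite (range k)"
      unfolding infinite_nat_iff_unbounded
    proof
      fix m
      have "Suc m \<le> k (Suc m)" using seq_suble[OF smk] by blast
      thus "\<exists>n>m. n \<in> range k" by (intro exI[of _ "k (Suc m)"]) auto
    qed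
    moreover have "range k \<subseteq> UNIV - ran tw" using k_notin by auto
    ultimately have "infinite (UNIV - ran tw)" using infinite_super by blast
    hence twL: "tw \<in> Lam" unfolding Lam_def using dom_eq inj_tw by blast
    have lam_bound: "lam tw \<le> lam (t (Suc n)) + e (Suc n)" for n
    proof -
      have bm: "lam (t m) \<le> lam (t (Suc n)) + e (Suc n)" for m
      proof (cases "Suc n \<le> m")
        case True then show ?thesis using ext_le(2)[OF True] by linarith
      next
        case False then have "m \<le> Suc n" by simp
        then have "lam (t m) \<le> lam (t (Suc n))" using lam_mono[OF injt ext_le(1)] by blast
        then show ?thesis using I(2)[of "Suc n"] by linarith
      qed
      show ?thesis unfolding lam_wt
      proof (rule infsum_le_finite_sums[OF wt_summable[OF inj_tw order_refl]])
        fix F assume F: "finite F" "F \<subseteq> dom tw"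
        then obtain m where Fm: "F \<subseteq> dom (t m)"
          using finite_chain_subset[OF mono_dom F(1)] dom_tw by auto
        have "sum (wt tw) F = sum (wt (t m)) F"
          using wt_agree[OF le_tw[of m]] Fm by (intro sum.cong) (auto simp del: wt_def, metis subsetD)
        also have "\<dots> \<le> infsum (wt (t m)) (dom (t m))"
          by (rule finite_sum_le_infsum[OF wt_summable[OF injt order_refl] F(1) Fm]) (simp add: wt_nonneg)
        also have "\<dots> \<le> infsum (wt (t (Suc n))) (dom (t (Suc n))) + e (Suc n)"
          using bm[of m] unfolding lam_wt .
        finally show "sum (wt tw) F \<le> infsum (wt (t (Suc n))) (dom (t (Suc n))) + e (Suc n)" .
      qed
    qed
    have in_nb: "tw \<in> nbhd (t n) (e n)" for n
    proof -
      have "lam tw < lam (t n) + e n" using lam_bound[of n] Rn(3)[of n] I(2)[of "Suc n"] by linarith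
      thus ?thesis unfolding nbhd_def using twL le_tw by auto
    qed
    have "tw \<in> W" using in_nb[of 0] I(5)[of 0] by blast
    moreover have "tw \<in> U n" for n using in_nb[of "Suc n"] Rn(2)[of n] by blast
    ultimately show "(\<Inter>n. U n) \<inter> W \<noteq> {}" by blast
  qed
qed

end
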